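(* Let $p \ge 2$, $k = 2^{p-1}$ and let $M$ be the model matrix of the main effect model of the $2^{p-1}$ fractional factorial design of resolution $p$ (defined in the context). For every degree $2$ fiber $F$ with more than one element, choose a set $\mathcal{B}_F$ of $|F|-1$ moves, each of the form $\mathbf{x}-\mathbf{y}$ with $\mathbf{x},\mathbf{y}\in F$, such that the graph on $F$ with edges $\{\mathbf{x},\mathbf{y}\}$ for $\mathbf{x}-\mathbf{y}\in\mathcal{B}_F$ is connected. Then $\mathcal{B} = \bigcup_F \mathcal{B}_F$ is a minimal Markov basis for $M'$; that is, a minimal Markov basis for $M'$ is constructed as the set of moves connecting all degree $2$ fibers with more than one element.
   Context: Cells are indexed by $\mathbf{i} = (i_1,\ldots,i_{p-1}) \in \{0,1\}^{p-1}$; vectors in $\mathbb{Z}^k$ are indexed by cells. The design: in run $\mathbf{i}$, factor $m$ ($1\le m\le p-1$) is at level $(-1)^{i_m}$ and factor $p$ at level $(-1)^{i_1+\cdots+i_{p-1}}$ (defining relation: product of all $p$ factors is the identity). $M$ is the $k\times(p+1)$ matrix whose row for run $\mathbf{i}$ is $\big(1,(-1)^{i_1},\ldots,(-1)^{i_{p-1}},(-1)^{i_1+\cdots+i_{p-1}}\big)$. A move is $\mathbf{z}\in\mathbb{Z}^k$ with $M'\mathbf{z}=\mathbf{0}$. For $\mathbf{b}\in\mathbb{N}^k$ the fiber is $\mathcal{F}(M'\mathbf{b})=\{\mathbf{y}\in\mathbb{N}^k : M'\mathbf{y}=M'\mathbf{b}\}$; it is a degree $2$ fiber if $\sum_{\mathbf{i}}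 b(\mathbf{i}) = 2$. For a set $\mathcal{B}$ of moves, $G(\mathbf{b},\mathcal{B})$ is the graph on $\mathcal{F}(M'\mathbf{b})$ joining $\mathbf{x},\mathbf{y}$ when $\pm(\mathbf{y}-\mathbf{x})\in\mathcal{B}$. A finite set $\mathcal{B}$ of moves is a Markov basis for $M'$ if $G(\mathbf{b},\mathcal{B})$ is connected for every $\mathbf{b}\in\mathbb{N}^k$, and minimal if no proper subset is a Markov basis. *)

theory Defs
  imports Main
begin

text \<open>Cells: 0/1 lists of length p-1 (entry m-1 of the list is i_m).
  Vectors in Z^k: functions from cells to int, zero outside the cells.\<close>

definition cells :: "nat \<Rightarrow> nat list set" where
  "cells p = {i. length i = p - 1 \<and> set i \<subseteq> {0, 1}}"

definition Mentry :: "nat \<Rightarrow> nat list \<Rightarrow> nat \<Rightarrow> int" where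
  "Mentry p i j =
     (if j = 0 then 1
      else if j < p then (-1) ^ (i ! (j - 1))
      else (-1) ^ (sum_list i))"

definition Mt :: "nat \<Rightarrow> (nat list \<Rightarrow> int) \<Rightarrow> nat \<Rightarrow> int" where
  "Mt p z j = (\<Sum>i\<in>cells p. Mentry p i j * z i)"

definition vec :: "nat \<Rightarrow> (nat list \<Rightarrow> int) \<Rightarrow> bool" where
  "vec p z \<longleftrightarrow> (\<forall>i. i \<notin> cells p \<longrightarrow> z i = 0)"

definition nonneg_vec :: "nat \<Rightarrow> (nat list \<Rightarrow> int) \<Rightarrow> bool" where
  "nonneg_vec p b \<longleftrightarrow> vec p b \<and> (\<forall>i. b i \<ge> 0)"

definition is_move :: "nat \<Rightarrow> (nat list \<Rightarrow> int) \<Rightarrow> bool" where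
  "is_move p z \<longleftrightarrow> vec p z \<and> (\<forall>j\<le>p. Mt p z j = 0)"

definition fiber :: "nat \<Rightarrow> (nat list \<Rightarrow> int) \<Rightarrow> (nat list \<Rightarrow> int) set" where
  "fiber p b = {y. nonneg_vec p y \<and> (\<forall>j\<le>p. Mt p y j = Mt p b j)}"

definition graph_connected ::
  "(nat list \<Rightarrow> int) set \<Rightarrow> (nat list \<Rightarrow> int) set \<Rightarrow> bool" where
  "graph_connected F B \<longleftrightarrow>
     (\<forall>x\<in>F. \<forall>y\<in>F. (x, y) \<in>
        {(u, v). u \<in> F \<and> v \<in> F \<and> (v - u \<in> B \<or> u - v \<in> B)}\<^sup>*)"

definition markov_basis :: "nat \<Rightarrow> (nat list \<Rightarrow> int) set \<Rightarrow> bool" where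
  "markov_basis p B \<longleftrightarrow> finite B \<and> (\<forall>z\<in>B. is_move p z) \<and>
     (\<forall>b. nonneg_vec p b \<longrightarrow> graph_connected (fiber p b) B)"

definition minimal_markov_basis :: "nat \<Rightarrow> (nat list \<Rightarrow> int) set \<Rightarrow> bool" where
  "minimal_markov_basis p B \<longleftrightarrow> markov_basis p B \<and>
     (\<forall>B'. B' \<subset> B \<longrightarrow> \<not> markov_basis p B')"

definition deg2_fibers :: "nat \<Rightarrow> (nat list \<Rightarrow> int) set set" where
  "deg2_fibers p = {fiber p b | b. nonneg_vec p b \<and> (\<Sum>i\<in>cells p. b i) = 2}"

end

theory Submission imports Defs "HOL-Library.Multiset" "HOL-Library.Function_Algebras" begin

definition ind :: "nat list \<Rightarrow> nat list \<Rightarrow> int" where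
  "ind a = (\<lambda>c. if c = a then 1 else 0)"
definition cntm :: "nat list multiset \<Rightarrow> nat list \<Rightarrow> int" where
  "cntm M = (\<lambda>c. int (count M c))"

lemma finite_cells: "finite (cells p)"
proof -
  have "cells p = {xs. set xs \<subseteq> {0,1} \<and> length xs = p - 1}" unfolding cells_def by auto
  then show ?thesis using finite_lists_length_eq[of "{0,1::nat}"] by simp
qed

lemma Mt_add: "Mt p (f + g) j = Mt p f j + Mt p g j"
  unfolding Mt_def by (simp add: distrib_left sum.distrib)
lemma Mt_diff: "Mt p (f - g) j = Mt p f j - Mt p g j"
  unfolding Mt_def by (simp add: right_diff_distrib sum_subtractf)
lemma Mt_ind: "a \<in> cells p \<Longrightarrow> Mt p (ind a) j = Mentry p a j"
  unfolding Mt_def ind_def using finite_cells[of p]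
  by (simp add: if_distrib cong: if_cong)

lemma cntm_add_mset: "cntm (add_mset a M) = cntm M + ind a"
  unfolding cntm_def ind_def by auto
lemma cntm_plus: "cntm (M + N) = cntm M + cntm N"
  unfolding cntm_def by auto
lemma cntm_empty: "cntm {#} = 0"
  unfolding cntm_def by auto

lemma Mt_zero: "Mt p 0 j = 0" unfolding Mt_def zero_fun_def by simp

lemma Mt_cntm: "set_mset M \<subseteq> cells p \<Longrightarrow> Mt p (cntm M) j = (\<Sum>r\<in>#M. Mentry p r j)"
proof (induct M)
  case empty then show ?case by (simp add: cntm_def Mt_def)
next
  case (add x M)
  have "Mt p (cntm (add_mset x M)) j = Mt p (cntm M) j + Mt p (ind x) j"
    by (simp only: cntm_add_mset Mt_add)
  then show ?case using add by (simp add: Mt_ind add.commute)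
qed

lemma nonneg_cntm: "set_mset M \<subseteq> cells p \<Longrightarrow> nonneg_vec p (cntm M)"
  unfolding nonneg_vec_def vec_def cntm_def
  by (auto simp: not_in_iff[symmetric])

lemma ex_cntm:
  assumes "nonneg_vec p x"
  shows "\<exists>M. set_mset M \<subseteq> cells p \<and> x = cntm M"
proof -
  define M where "M = (\<Sum>c\<in>cells p. replicate_mset (nat (x c)) c)"
  have cnt: "count M d = (if d \<in> cells p then nat (x d) else 0)" for d
    unfolding M_def count_sum using finite_cells[of p]
    by (simp add: count_replicate_mset if_distrib cong: if_cong)
  have "set_mset M \<subseteq> cells p"
  proof
    fix d assume "d \<in># M"
    then have "count M d > 0" by simp
    then show "d \<in> cells p" using cnt[of d] by (auto split: if_splits)
  qed
  moreover have "x = cntm M"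
  proof
    fix d show "x d = cntm M d"
      using assms cnt[of d] unfolding cntm_def nonneg_vec_def vec_def by auto
  qed
  ultimately show ?thesis by blast
qed

definition bt :: "nat \<Rightarrow> nat list \<Rightarrow> nat \<Rightarrow> nat" where
  "bt p r j = (if j < p then r ! (j - 1) else sum_list r mod 2)"

lemma cellsD: "r \<in> cells p \<Longrightarrow> length r = p - 1 \<and> set r \<subseteq> {0,1}"
  unfolding cells_def by auto

lemma bt_le1: assumes "r \<in> cells p" "1 \<le> j" shows "bt p r j \<le> 1"
proof (cases "j < p")
  case True
  then have "j - 1 < length r" using cellsD[OF assms(1)] assms(2) by auto
  then have "r ! (j-1) \<in> {0,1}" using cellsD[OF assms(1)] nth_mem by blast
  then show ?thesis using True unfolding bt_def by auto
qed (auto simp: bt_def)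

lemma Mentry_bt:
  assumes "r \<in> cells p" "1 \<le> j" "j \<le> p"
  shows "Mentry p r j = 1 - 2 * int (bt p r j)"
proof (cases "j < p")
  case True
  then have "j - 1 < length r" using cellsD[OF assms(1)] assms(2) by auto
  then have "r ! (j-1) \<in> {0,1}" using cellsD[OF assms(1)] nth_mem by blast
  then show ?thesis using True assms unfolding bt_def Mentry_def by auto
next
  case False
  have "(-1::int) ^ sum_list r = (if even (sum_list r) then 1 else -1)" by simp
  then show ?thesis using False assms unfolding bt_def Mentry_def
    by (auto simp: odd_iff_mod_2_eq_one even_iff_mod_2_eq_zero)
qed

lemma Mentry_0: "Mentry p r 0 = 1" unfolding Mentry_def by simp

lemma bt_inj:
  assumes "r \<in> cells p" "s \<in> cells p" "\<forall>j\<in>{1..p}. bt p r j = bt p s j"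
  shows "r = s"
proof (rule nth_equalityI)
  show "length r = length s" using cellsD[OF assms(1)] cellsD[OF assms(2)] by simp
  fix i assume "i < length r"
  then have "i < p - 1" using cellsD[OF assms(1)] by simp
  then have "bt p r (Suc i) = bt p s (Suc i)" using assms(3) by auto
  moreover have "Suc i < p" using \<open>i < p - 1\<close> by simp
  ultimately show "r ! i = s ! i" unfolding bt_def by simp
qed

lemma bt_parity:
  assumes "r \<in> cells p"
  shows "even (\<Sum>j\<in>{1..p}. bt p r j)"
proof (cases "p = 0")
  case True then show ?thesis by simp
next
  case False
  have l: "length r = p - 1" using cellsD[OF assms] by simp
  have e1: "{1..p} = insert p {1..p-1}" using False by auto
  have e2: "{1..p-1} = Suc ` {..<p-1}" by (simp add: image_Suc_lessThan)
  have "(\<Sum>j\<in>{1..p}. bt p r j) = bt p r p + (\<Sum>j\<in>Suc ` {..<p-1}. bt p r j)"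
    unfolding e1 e2[symmetric] using False by simp
  also have "(\<Sum>j\<in>Suc ` {..<p-1}. bt p r j) = (\<Sum>i<p-1. bt p r (Suc i))"
    by (simp add: sum.reindex)
  also have "\<dots> = (\<Sum>i<p-1. r ! i)"
    by (rule sum.cong) (auto simp: bt_def)
  also have "\<dots> = sum_list r" using l by (simp add: sum_list_sum_nth atLeast0LessThan)
  finally have "(\<Sum>j\<in>{1..p}. bt p r j) = sum_list r mod 2 + sum_list r" by (simp add: bt_def)
  moreover have "even ((s::nat) mod 2 + s)" for s
    by (cases "even s") (auto simp: odd_iff_mod_2_eq_one)
  ultimately show ?thesis by simp
qed

definition tog :: "nat \<Rightarrow> nat list \<Rightarrow> nat \<Rightarrow> nat list" where
  "tog p r j = (if j < p then r[j-1 := 1 - r!(j-1)] else r)"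
definition flip2 :: "nat \<Rightarrow> nat list \<Rightarrow> nat \<Rightarrow> nat \<Rightarrow> nat list" where
  "flip2 p r j k = tog p (tog p r j) k"

lemma tog_cells: assumes "r \<in> cells p" "1 \<le> j" shows "tog p r j \<in> cells p"
proof (cases "j < p")
  case True
  have "set (r[j-1 := 1 - r!(j-1)]) \<subseteq> insert (1 - r!(j-1)) (set r)"
    by (rule set_update_subset_insert)
  moreover have "1 - r!(j-1) \<in> {0,1::nat}" by auto
  ultimately show ?thesis using True cellsD[OF assms(1)] unfolding tog_def cells_def by auto
qed (use assms in \<open>auto simp: tog_def\<close>)

lemma flip2_cells: "r \<in> cells p \<Longrightarrow> 1 \<le> j \<Longrightarrow> 1 \<le> k \<Longrightarrow> flip2 p r j k \<in> cells p"
  unfolding flip2_def using tog_cells by blast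

lemma parity_aux: "(a::nat) \<le> 1 \<Longrightarrow> a \<le> S \<Longrightarrow> (S + (1 - a) - a) mod 2 = 1 - S mod 2"
proof -
  assume "a \<le> 1" "a \<le> S"
  then consider "a = 0" | "a = 1" by linarith
  then show ?thesis
  proof cases
    case 1 then show ?thesis by (simp add: mod_Suc)
  next
    case 2 then obtain T where "S = Suc T" using \<open>a \<le> S\<close> by (cases S) auto
    then show ?thesis using 2 by (simp add: mod_Suc)
  qed
qed

lemma bt_tog:
  assumes "r \<in> cells p" "1 \<le> j" "1 \<le> l" "l \<le> p"
  shows "bt p (tog p r j) l = (if j < p \<and> (l = j \<or> l = p) then 1 - bt p r l else bt p r l)"
proof (cases "j < p")
  case False then show ?thesis by (simp add: tog_def)
next
  case True
  have len: "j - 1 < length r" using cellsD[OF assms(1)] assms True by auto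
  have a1: "r ! (j-1) \<le> 1" using bt_le1[OF assms(1) assms(2)] True by (simp add: bt_def)
  show ?thesis
  proof (cases "l < p")
    case True
    then show ?thesis using \<open>j < p\<close> len assms unfolding tog_def bt_def
      by (auto simp: nth_list_update)
  next
    case False
    then have lp: "l = p" using assms by simp
    have aS: "r ! (j-1) \<le> sum_list r" using len
      by (metis elem_le_sum_list)
    have "sum_list (r[j-1 := 1 - r!(j-1)]) = sum_list r + (1 - r!(j-1)) - r!(j-1)"
      using len by (simp add: sum_list_update)
    then show ?thesis using lp \<open>j < p\<close> parity_aux[OF a1 aS] unfolding tog_def bt_def by simp
  qed
qed

lemma bt_flip2:
  assumes "r \<in> cells p" "j \<in> {1..p}" "k \<in> {1..p}" "j \<noteq> k" "l \<in> {1..p}"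
  shows "bt p (flip2 p r j k) l = (if l = j \<or> l = k then 1 - bt p r l else bt p r l)"
proof -
  have r1: "tog p r j \<in> cells p" using tog_cells assms by auto
  have b: "bt p r l \<le> 1" using bt_le1 assms by auto
  show ?thesis unfolding flip2_def using assms b
    by (auto simp: bt_tog[OF r1] bt_tog[OF assms(1)])
qed

lemma opp_exists:
  fixes X Y :: "nat \<Rightarrow> nat \<Rightarrow> nat"
  assumes bin: "\<And>t. t < n \<Longrightarrow> X t j \<le> 1 \<and> Y t j \<le> 1"
    and col: "(\<Sum>t<n. X t j) = (\<Sum>t<n. Y t j)"
    and i: "i < n" "X i j \<noteq> Y i j"
  shows "\<exists>i'<n. X i' j \<noteq> Y i' j \<and> X i' j \<noteq> X i j"
proof (rule ccontr)
  assume "\<not> ?thesis"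
  then have H: "\<And>t. t < n \<Longrightarrow> X t j \<noteq> Y t j \<Longrightarrow> X t j = X i j" by blast
  have bi: "X i j \<le> 1" "Y i j \<le> 1" using bin i by auto
  show False
  proof (cases "X i j = 1")
    case True
    have "\<forall>t\<in>{..<n}. Y t j \<le> X t j" using H True bin by fastforce
    moreover have "\<exists>t\<in>{..<n}. Y t j < X t j" using i True bi by (intro bexI[of _ i]) auto
    ultimately have "(\<Sum>t<n. Y t j) < (\<Sum>t<n. X t j)" by (intro sum_strict_mono_ex1) auto
    then show False using col by simp
  next
    case False
    then have X0: "X i j = 0" using bi by simp
    have "\<forall>t\<in>{..<n}. X t j \<le> Y t j" using H X0 by fastforce
    moreover have "\<exists>t\<in>{..<n}. X t j < Y t j" using i X0 by (intro bexI[of _ i]) auto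
    ultimately have "(\<Sum>t<n. X t j) < (\<Sum>t<n. Y t j)" by (intro sum_strict_mono_ex1) auto
    then show False using col by simp
  qed
qed

lemma other_mismatch:
  fixes f :: "nat \<Rightarrow> bool"
  assumes "finite A" "j \<in> A" "f j" "even (\<Sum>l\<in>A. if f l then 1 else 0::nat)"
  shows "\<exists>m\<in>A. m \<noteq> j \<and> f m"
proof (rule ccontr)
  assume "\<not> ?thesis"
  then have "(\<Sum>l\<in>A - {j}. if f l then 1 else 0::nat) = 0"
    by (intro sum.neutral) auto
  moreover have "(\<Sum>l\<in>A. if f l then 1 else 0::nat) =
      (if f j then 1 else 0) + (\<Sum>l\<in>A - {j}. if f l then 1 else 0::nat)"
    using assms(1,2) by (simp add: sum.remove)
  ultimately show False using assms(3,4) by simp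
qed

lemma core:
  fixes X Y :: "nat \<Rightarrow> nat \<Rightarrow> nat"
  assumes bin: "\<And>t l. t < n \<Longrightarrow> l \<in> {1..p} \<Longrightarrow> X t l \<le> 1 \<and> Y t l \<le> 1"
    and col: "\<And>l. l \<in> {1..p} \<Longrightarrow> (\<Sum>t<n. X t l) = (\<Sum>t<n. Y t l)"
    and ev: "\<And>t. t < n \<Longrightarrow> even (\<Sum>l\<in>{1..p}. if X t l = Y t l then 0 else 1::nat)"
    and t0: "t0 < n" "j0 \<in> {1..p}" "X t0 j0 \<noteq> Y t0 j0"
  shows "\<exists>i i' j k. i < n \<and> i' < n \<and> j \<in> {1..p} \<and> k \<in> {1..p} \<and> j \<noteq> k \<and>
     X i j \<noteq> Y i j \<and> X i' j \<noteq> Y i' j \<and> X i j \<noteq> X i' j \<and>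
     (X i k \<noteq> X i' k \<or> Y i k \<noteq> Y i' k) \<and> \<not> (X i k = Y i k \<and> X i' k = Y i' k)"
    (is "\<exists>i i' j k. ?W i i' j k")
proof -
  define good where "good i i' j \<longleftrightarrow> (\<exists>k\<in>{1..p}. k \<noteq> j \<and>
     (X i k \<noteq> X i' k \<or> Y i k \<noteq> Y i' k) \<and> \<not> (X i k = Y i k \<and> X i' k = Y i' k))"
    for i i' j
  have use_good: "?W i i' j k" if "i < n" "i' < n" "j \<in> {1..p}" "X i j \<noteq> Y i j"
     "X i' j \<noteq> Y i' j" "X i j \<noteq> X i' j" "k \<in> {1..p}" "k \<noteq> j"
     "(X i k \<noteq> X i' k \<or> Y i k \<noteq> Y i' k) \<and> \<not> (X i k = Y i k \<and> X i' k = Y i' k)"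
     for i i' j k using that by auto
  obtain i' where i': "i' < n" "X i' j0 \<noteq> Y i' j0" "X i' j0 \<noteq> X t0 j0"
    using opp_exists[of n X j0 Y t0] bin col t0 by blast
  show ?thesis
  proof (cases "good t0 i' j0")
    case True
    then show ?thesis unfolding good_def using use_good[of t0 i' j0] t0 i' by metis
  next
    case False
    then have NG: "\<And>k. k \<in> {1..p} \<Longrightarrow> k \<noteq> j0 \<Longrightarrow>
        (X t0 k = X i' k \<and> Y t0 k = Y i' k) \<or> (X t0 k = Y t0 k \<and> X i' k = Y i' k)"
      unfolding good_def by blast
    have "even (\<Sum>l\<in>{1..p}. if X t0 l \<noteq> Y t0 l then 1 else 0::nat)"
      using ev[OF t0(1)] by (simp add: if_not_P cong: if_cong) (smt (verit) sum.cong)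
    then obtain m where m: "m \<in> {1..p}" "m \<noteq> j0" "X t0 m \<noteq> Y t0 m"
      using other_mismatch[of "{1..p}" j0 "\<lambda>l. X t0 l \<noteq> Y t0 l"] t0 by auto
    have mi': "X i' m = X t0 m" "Y i' m = Y t0 m" using NG[OF m(1,2)] m(3) by auto
    obtain i'' where i'': "i'' < n" "X i'' m \<noteq> Y i'' m" "X i'' m \<noteq> X t0 m"
      using opp_exists[of n X m Y t0] bin col t0 m by blast
    have "good t0 i'' m \<or> good i' i'' m"
    proof (rule ccontr)
      assume "\<not> ?thesis"
      then have a: "\<not> good t0 i'' m" and b: "\<not> good i' i'' m" by auto
      from a have "X i'' j0 = X t0 j0" unfolding good_def using t0 m by auto
      moreover from b have "X i'' j0 = X i' j0" unfolding good_def using t0 m i' by auto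
      ultimately show False using i' by simp
    qed
    then show ?thesis
    proof
      assume "good t0 i'' m"
      then show ?thesis unfolding good_def using use_good[of t0 i'' m] t0 i'' m by metis
    next
      assume "good i' i'' m"
      then show ?thesis unfolding good_def using use_good[of i' i'' m] i' i'' m mi' by metis
    qed
  qed
qed


definition dst :: "nat \<Rightarrow> nat list \<Rightarrow> nat list \<Rightarrow> nat" where
  "dst p r s = (\<Sum>l\<in>{1..p}. if bt p r l = bt p s l then 0 else 1)"

lemma sum_split2:
  assumes "finite A" "j \<in> A" "k \<in> A" "j \<noteq> k"
  shows "sum f A = f j + f k + sum f (A - {j,k})"
proof -
  have "sum f A = f j + sum f (A - {j})" using assms by (simp add: sum.remove)
  also have "sum f (A - {j}) = f k + sum f (A - {j} - {k})" using assms by (simp add: sum.remove)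
  finally show ?thesis by (simp add: Diff_insert2[symmetric] add.assoc)
qed

lemma dst_sym: "dst p r s = dst p s r"
  unfolding dst_def by (rule sum.cong) auto

lemma dst_even:
  assumes "r \<in> cells p" "s \<in> cells p"
  shows "even (dst p r s)"
proof -
  have eq: "bt p r l + bt p s l = (if bt p r l = bt p s l then 0 else 1) + 2 * (bt p r l * bt p s l)"
    if "l \<in> {1..p}" for l
  proof -
    have "bt p r l \<le> 1" "bt p s l \<le> 1" using bt_le1 assms that by auto
    then show ?thesis by (cases "bt p r l"; cases "bt p s l") auto
  qed
  have "(\<Sum>l\<in>{1..p}. bt p r l) + (\<Sum>l\<in>{1..p}. bt p s l) =
        (\<Sum>l\<in>{1..p}. bt p r l + bt p s l)" by (simp add: sum.distrib)
  also have "\<dots> = (\<Sum>l\<in>{1..p}. (if bt p r l = bt p s l then 0 else 1) + 2 * (bt p r l * bt p s l))"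
    by (rule sum.cong) (auto simp: eq)
  also have "\<dots> = dst p r s + 2 * (\<Sum>l\<in>{1..p}. bt p r l * bt p s l)"
    by (simp add: sum.distrib sum_distrib_left dst_def)
  finally have "(\<Sum>l\<in>{1..p}. bt p r l) + (\<Sum>l\<in>{1..p}. bt p s l) =
        dst p r s + 2 * (\<Sum>l\<in>{1..p}. bt p r l * bt p s l)" .
  then show ?thesis using bt_parity[OF assms(1)] bt_parity[OF assms(2)]
    by (metis even_add even_mult_iff even_numeral)
qed

lemma dst_0:
  assumes "r \<in> cells p" "s \<in> cells p" "dst p r s = 0"
  shows "r = s"
proof (rule bt_inj[OF assms(1,2)])
  show "\<forall>j\<in>{1..p}. bt p r j = bt p s j"
    using assms(3) unfolding dst_def by (auto split: if_splits)
qed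

lemma dst_flip_dec:
  assumes cl: "u \<in> cells p" "v \<in> cells p" "a \<in> cells p" "b \<in> cells p"
    and jk: "j \<in> {1..p}" "k \<in> {1..p}" "j \<noteq> k"
    and c1: "bt p u j \<noteq> bt p a j" "bt p v j \<noteq> bt p b j" "bt p u j \<noteq> bt p v j"
    and c2: "bt p u k \<noteq> bt p v k" "\<not> (bt p u k = bt p a k \<and> bt p v k = bt p b k)"
  shows "dst p (flip2 p u j k) a + dst p (flip2 p v j k) b < dst p u a + dst p v b"
proof -
  define g where "g w t l = (if bt p w l = bt p t l then 0 else 1::nat)" for w t l
  have d: "dst p w t = g w t j + g w t k + (\<Sum>l\<in>{1..p} - {j,k}. g w t l)" for w t
    unfolding dst_def g_def using sum_split2[of "{1..p}" j k "\<lambda>l. if bt p w l = bt p t l then 0 else 1"] jk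
    by simp
  have rest: "(\<Sum>l\<in>{1..p} - {j,k}. g (flip2 p w j k) t l) = (\<Sum>l\<in>{1..p} - {j,k}. g w t l)"
    if "w \<in> cells p" for w t
    by (rule sum.cong) (use that jk in \<open>auto simp: g_def bt_flip2\<close>)
  have bits: "bt p u j \<le> 1" "bt p v j \<le> 1" "bt p a j \<le> 1" "bt p b j \<le> 1"
    "bt p u k \<le> 1" "bt p v k \<le> 1" "bt p a k \<le> 1" "bt p b k \<le> 1"
    using bt_le1 cl jk by auto
  have fu: "bt p (flip2 p u j k) j = 1 - bt p u j" "bt p (flip2 p u j k) k = 1 - bt p u k"
    "bt p (flip2 p v j k) j = 1 - bt p v j" "bt p (flip2 p v j k) k = 1 - bt p v k"
    using bt_flip2 cl jk by auto
  have "g (flip2 p u j k) a j + g (flip2 p u j k) a k + g (flip2 p v j k) b j + g (flip2 p v j k) b k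
        < g u a j + g u a k + g v b j + g v b k"
    unfolding g_def fu using bits c1 c2 by auto
  then show ?thesis using d rest cl by (simp add: d[of "flip2 p u j k" a] d[of "flip2 p v j k" b] rest)
qed

lemma Mt0: "Mt p x 0 = (\<Sum>i\<in>cells p. x i)"
  unfolding Mt_def by (simp add: Mentry_0)

lemma ind_nonneg: "u \<in> cells p \<Longrightarrow> nonneg_vec p (ind u)"
  unfolding nonneg_vec_def vec_def ind_def by auto

lemma sum_ind: "u \<in> cells p \<Longrightarrow> (\<Sum>i\<in>cells p. ind u i) = 1"
  unfolding ind_def using finite_cells by (simp add: if_distrib cong: if_cong)

lemma nonneg_add: "nonneg_vec p f \<Longrightarrow> nonneg_vec p g \<Longrightarrow> nonneg_vec p (f + g)"
  unfolding nonneg_vec_def vec_def by auto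

lemma fiber_finite: "finite (fiber p b)"
proof -
  define N where "N = Mt p b 0"
  have "fiber p b \<subseteq> {f. \<forall>x. (x \<in> cells p \<longrightarrow> f x \<in> {0..N}) \<and> (x \<notin> cells p \<longrightarrow> f x = 0)}"
  proof safe
    fix f x assume f: "f \<in> fiber p b"
    then have nn: "nonneg_vec p f" and m: "Mt p f 0 = N" unfolding fiber_def N_def by auto
    {
      assume x: "x \<in> cells p"
      have "f x \<le> (\<Sum>i\<in>cells p. f i)"
        using nn x finite_cells by (intro member_le_sum) (auto simp: nonneg_vec_def)
      then show "f x \<in> {0..N}" using m nn by (auto simp: Mt0 nonneg_vec_def)
    }
    { assume "x \<notin> cells p" then show "f x = 0" using nn by (auto simp: nonneg_vec_def vec_def) }
  qed
  moreover have "finite {f. \<forall>x. (x \<in> cells p \<longrightarrow> f x \<in> {0..N}) \<and> (x \<notin> cells p \<longrightarrow> f x = 0)}"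
    by (rule finite_set_of_finite_funs) (auto simp: finite_cells)
  ultimately show ?thesis by (rule finite_subset)
qed

lemma deg2_in:
  assumes "u \<in> cells p" "v \<in> cells p"
  shows "fiber p (ind u + ind v) \<in> deg2_fibers p"
proof -
  have "nonneg_vec p (ind u + ind v)" using assms ind_nonneg nonneg_add by blast
  moreover have "(\<Sum>i\<in>cells p. (ind u + ind v) i) = 2"
    using sum_ind[OF assms(1)] sum_ind[OF assms(2)] by (simp add: sum.distrib)
  ultimately show ?thesis unfolding deg2_fibers_def by blast
qed

lemma fiber_self: "nonneg_vec p b \<Longrightarrow> b \<in> fiber p b"
  unfolding fiber_def by auto

lemma fiber_eq: "x \<in> fiber p b \<Longrightarrow> fiber p x = fiber p b"
  unfolding fiber_def by auto

definition edges :: "(nat list \<Rightarrow> int) set \<Rightarrow> (nat list \<Rightarrow> int) set \<Rightarrow>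
    ((nat list \<Rightarrow> int) \<times> (nat list \<Rightarrow> int)) set" where
  "edges F B = {(u, v). u \<in> F \<and> v \<in> F \<and> (v - u \<in> B \<or> u - v \<in> B)}"

lemma gc_edges: "graph_connected F B \<longleftrightarrow> (\<forall>x\<in>F. \<forall>y\<in>F. (x,y) \<in> (edges F B)\<^sup>*)"
  unfolding graph_connected_def edges_def by simp

lemma edges_sym: "(x,y) \<in> (edges F B)\<^sup>* \<Longrightarrow> (y,x) \<in> (edges F B)\<^sup>*"
proof -
  have "(edges F B)\<inverse> = edges F B" unfolding edges_def by auto
  moreover assume "(x,y) \<in> (edges F B)\<^sup>*"
  ultimately show ?thesis by (metis converseI rtrancl_converseI)
qed

locale mb =
  fixes p :: nat and BF :: "(nat list \<Rightarrow> int) set \<Rightarrow> (nat list \<Rightarrow> int) set"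
  assumes p2: "p \<ge> 2"
    and hBF: "\<And>F. F \<in> deg2_fibers p \<Longrightarrow> card F > 1 \<Longrightarrow>
           card (BF F) = card F - 1 \<and>
           (\<forall>z\<in>BF F. \<exists>x\<in>F. \<exists>y\<in>F. z = x - y) \<and>
           graph_connected F (BF F)"
begin

definition BB where "BB = \<Union>{BF F | F. F \<in> deg2_fibers p \<and> card F > 1}"

lemma local_move:
  assumes r: "nonneg_vec p r" and cl: "u \<in> cells p" "v \<in> cells p" "a \<in> cells p" "c \<in> cells p"
    and inG: "r + ind u + ind v \<in> fiber p b"
    and M: "\<forall>j\<le>p. Mentry p u j + Mentry p v j = Mentry p a j + Mentry p c j"
  shows "(r + ind u + ind v, r + ind a + ind c) \<in> (edges (fiber p b) BB)\<^sup>*"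
proof -
  define F where "F = fiber p (ind u + ind v)"
  have F2: "F \<in> deg2_fibers p" unfolding F_def using deg2_in cl by blast
  have x0: "ind u + ind v \<in> F" unfolding F_def
    using fiber_self ind_nonneg nonneg_add cl by blast
  have x1: "ind a + ind c \<in> F" unfolding F_def fiber_def
    using ind_nonneg nonneg_add cl M by (auto simp: Mt_add Mt_ind)
  have tr: "(r + x, r + y) \<in> (edges (fiber p b) BB)\<^sup>*" if "(x, y) \<in> (edges F (BF F))\<^sup>*"
     and "card F > 1" for x y
    using that(1)
  proof (induct rule: rtrancl_induct)
    case base then show ?case by simp
  next
    case (step y z)
    have inF: "y \<in> F" "z \<in> F" and d: "z - y \<in> BF F \<or> y - z \<in> BF F"
      using step(2) unfolding edges_def by auto
    have BFsub: "BF F \<subseteq> BB" unfolding BB_def using F2 that(2) by blast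
    have inG2: "r + w \<in> fiber p b" if "w \<in> F" for w
    proof -
      have "nonneg_vec p w" "\<forall>j\<le>p. Mt p w j = Mt p (ind u + ind v) j"
        using that unfolding F_def fiber_def by auto
      moreover have "\<forall>j\<le>p. Mt p (r + ind u + ind v) j = Mt p b j" using inG unfolding fiber_def by auto
      ultimately show ?thesis unfolding fiber_def using nonneg_add[OF r]
        by (auto simp: Mt_add add.assoc)
    qed
    have "(r + y, r + z) \<in> edges (fiber p b) BB"
      unfolding edges_def using inG2 inF d BFsub by auto
    then show ?case by (rule rtrancl_into_rtrancl[OF step(3)])
  qed
  show ?thesis
  proof (cases "card F > 1")
    case True
    then have "graph_connected F (BF F)" using hBF F2 by blast
    then have "(ind u + ind v, ind a + ind c) \<in> (edges F (BF F))\<^sup>*"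
      using x0 x1 unfolding gc_edges by blast
    from tr[OF this True] show ?thesis by (simp add: add.assoc)
  next
    case False
    then have "ind u + ind v = ind a + ind c"
      using card_le_Suc0_iff_eq[OF fiber_finite[of p "ind u + ind v"]] x0 x1 unfolding F_def by auto
    then show ?thesis by (simp add: add.assoc)
  qed
qed

end



lemma Mentry_flip:
  assumes cl: "u \<in> cells p" "v \<in> cells p" and jk: "j \<in> {1..p}" "k \<in> {1..p}" "j \<noteq> k"
    and d: "bt p u j \<noteq> bt p v j" "bt p u k \<noteq> bt p v k" and l: "l \<le> p"
  shows "Mentry p u l + Mentry p v l = Mentry p (flip2 p u j k) l + Mentry p (flip2 p v j k) l"
proof (cases "l = 0")
  case True then show ?thesis by (simp add: Mentry_0)
next
  case False
  then have l1: "l \<in> {1..p}" using l by auto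
  have fc: "flip2 p u j k \<in> cells p" "flip2 p v j k \<in> cells p" using flip2_cells cl jk by auto
  have b: "bt p u l \<le> 1" "bt p v l \<le> 1" using bt_le1 cl l1 by auto
  show ?thesis
    using l1 b d
    by (simp add: Mentry_bt[OF cl(1)] Mentry_bt[OF cl(2)] Mentry_bt[OF fc(1)] Mentry_bt[OF fc(2)]
        bt_flip2[OF cl(1) jk] bt_flip2[OF cl(2) jk] of_nat_diff) auto
qed

lemma mset_upd_eq: "i < length xs \<Longrightarrow> mset (xs[i:=a]) + {#xs!i#} = mset xs + {#a#}"
  by (simp add: mset_update insert_DiffM)

lemma mset_upd2:
  assumes "i < length xs" "i' < length xs" "i \<noteq> i'"
  shows "mset (xs[i:=a, i':=c]) + {#xs!i#} + {#xs!i'#} = mset xs + {#a#} + {#c#}"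
proof -
  have "mset (xs[i:=a, i':=c]) + {#xs[i:=a] ! i'#} = mset (xs[i:=a]) + {#c#}"
    using assms by (intro mset_upd_eq) simp
  moreover have "xs[i:=a] ! i' = xs ! i'" using assms by simp
  ultimately show ?thesis using mset_upd_eq[OF assms(1), of a]
    by (metis add.assoc add.commute)
qed

lemma cntm_upd2:
  assumes "i < length xs" "i' < length xs" "i \<noteq> i'"
  shows "cntm (mset (xs[i:=a, i':=c])) x + ind (xs!i) x + ind (xs!i') x = cntm (mset xs) x + ind a x + ind c x"
proof -
  define L where "L = xs[i:=a, i':=c]"
  have "mset L + {#xs!i#} + {#xs!i'#} = mset xs + {#a#} + {#c#}"
    unfolding L_def by (rule mset_upd2[OF assms])
  then have "count (mset L + {#xs!i#} + {#xs!i'#}) x = count (mset xs + {#a#} + {#c#}) x" by simp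
  then have "count (mset L) x + count {#xs!i#} x + count {#xs!i'#} x
      = count (mset xs) x + count {#a#} x + count {#c#} x" unfolding count_union .
  then show ?thesis unfolding L_def[symmetric] cntm_def ind_def by (simp split: if_splits)
qed

lemma Mt_list: "set xs \<subseteq> cells p \<Longrightarrow> Mt p (cntm (mset xs)) j = (\<Sum>t<length xs. Mentry p (xs!t) j)"
  by (simp add: Mt_cntm sum_mset_sum_list sum_list_sum_nth atLeast0LessThan flip: mset_map)

lemma fib_bits:
  assumes "set xs \<subseteq> cells p" "set ys \<subseteq> cells p" "cntm (mset xs) \<in> fiber p b" "cntm (mset ys) \<in> fiber p b"
  shows "length xs = length ys \<and> (\<forall>l\<in>{1..p}. (\<Sum>t<length xs. bt p (xs!t) l) = (\<Sum>t<length xs. bt p (ys!t) l))"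
proof -
  have eq: "\<forall>j\<le>p. (\<Sum>t<length xs. Mentry p (xs!t) j) = (\<Sum>t<length ys. Mentry p (ys!t) j)"
    using assms unfolding fiber_def by (auto simp: Mt_list)
  then have len: "length xs = length ys" using eq by (auto simp: Mentry_0 dest: spec[of _ 0])
  have cx: "\<And>t. t < length xs \<Longrightarrow> xs!t \<in> cells p" using assms(1) nth_mem by blast
  have cy: "\<And>t. t < length ys \<Longrightarrow> ys!t \<in> cells p" using assms(2) nth_mem by blast
  have "(\<Sum>t<length xs. bt p (xs!t) l) = (\<Sum>t<length xs. bt p (ys!t) l)" if l: "l \<in> {1..p}" for l
  proof -
    have "(\<Sum>t<length xs. Mentry p (xs!t) l) = (\<Sum>t<length xs. 1 - 2 * int (bt p (xs!t) l))"
      using l by (intro sum.cong) (auto simp: Mentry_bt[OF cx])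
    moreover have "(\<Sum>t<length ys. Mentry p (ys!t) l) = (\<Sum>t<length xs. 1 - 2 * int (bt p (ys!t) l))"
      using l len by (intro sum.cong) (auto simp: Mentry_bt[OF cy])
    ultimately have "(\<Sum>t<length xs. 1 - 2 * int (bt p (xs!t) l)) = (\<Sum>t<length xs. 1 - 2 * int (bt p (ys!t) l))"
      using eq l by auto
    then have "int (\<Sum>t<length xs. bt p (xs!t) l) = int (\<Sum>t<length xs. bt p (ys!t) l)"
      by (simp add: sum_subtractf sum_distrib_left[symmetric] of_nat_sum)
    then show ?thesis by (simp only: of_nat_eq_iff)
  qed
  then show ?thesis using len by auto
qed

lemma pot_dec:
  fixes f g :: "nat \<Rightarrow> nat"
  assumes "i < n" "i' < n" "i \<noteq> i'" "\<And>t. t < n \<Longrightarrow> t \<noteq> i \<Longrightarrow> t \<noteq> i' \<Longrightarrow> f t = g t"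
    "f i + f i' < g i + g i'"
  shows "(\<Sum>t<n. f t) < (\<Sum>t<n. g t)"
proof -
  have "(\<Sum>t<n. f t) = f i + f i' + (\<Sum>t\<in>{..<n} - {i,i'}. f t)" using assms by (intro sum_split2) auto
  moreover have "(\<Sum>t<n. g t) = g i + g i' + (\<Sum>t\<in>{..<n} - {i,i'}. g t)" using assms by (intro sum_split2) auto
  moreover have "(\<Sum>t\<in>{..<n} - {i,i'}. f t) = (\<Sum>t\<in>{..<n} - {i,i'}. g t)"
    using assms by (intro sum.cong) auto
  ultimately show ?thesis using assms by simp
qed

definition pot :: "nat \<Rightarrow> nat list list \<Rightarrow> nat list list \<Rightarrow> nat" where
  "pot p xs ys = (\<Sum>t<length xs. dst p (xs!t) (ys!t))"

context mb begin

lemma list_step: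
  assumes xs: "set xs \<subseteq> cells p" and G: "cntm (mset xs) \<in> fiber p b"
    and ii: "i < length xs" "i' < length xs" "i \<noteq> i'"
    and jk: "j \<in> {1..p}" "k \<in> {1..p}" "j \<noteq> k"
    and d: "bt p (xs!i) j \<noteq> bt p (xs!i') j" "bt p (xs!i) k \<noteq> bt p (xs!i') k"
  defines "xs' \<equiv> xs[i := flip2 p (xs!i) j k, i' := flip2 p (xs!i') j k]"
  shows "set xs' \<subseteq> cells p \<and> cntm (mset xs') \<in> fiber p b \<and>
         (cntm (mset xs), cntm (mset xs')) \<in> (edges (fiber p b) BB)\<^sup>*"
proof -
  define u where "u = xs!i"
  define v where "v = xs!i'"
  define a where "a = flip2 p u j k"
  define c where "c = flip2 p v j k"
  have cl: "u \<in> cells p" "v \<in> cells p" unfolding u_def v_def using xs ii nth_mem by blast+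
  have cl2: "a \<in> cells p" "c \<in> cells p" unfolding a_def c_def using flip2_cells cl jk by auto
  have xs'c: "set xs' \<subseteq> cells p" unfolding xs'_def
    using xs cl2 set_update_subset_insert unfolding a_def c_def u_def v_def
    by (metis (no_types, lifting) insert_subset order_trans set_update_subset_insert)
  define r where "r = cntm (mset xs) - ind u - ind v"
  define w where "w = u @ v @ [0]"
  have wn: "w \<noteq> u" "w \<noteq> v" unfolding w_def by (auto dest: arg_cong[of _ _ length])
  have rnn: "r x \<ge> 0" for x
  proof (cases "x = w")
    case True then show ?thesis using wn unfolding r_def ind_def cntm_def by auto
  next
    case False
    have "cntm (mset (xs[i:=w, i':=w])) x + ind u x + ind v x = cntm (mset xs) x + ind w x + ind w x"
      using cntm_upd2[OF ii] unfolding u_def v_def by blast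
    then show ?thesis using False unfolding r_def ind_def by (auto simp: cntm_def)
  qed
  have rvec: "nonneg_vec p r"
  proof -
    have "nonneg_vec p (cntm (mset xs))" using nonneg_cntm[of "mset xs" p] xs by simp
    then show ?thesis using rnn cl unfolding nonneg_vec_def vec_def r_def ind_def by auto
  qed
  have e1: "cntm (mset xs) = r + ind u + ind v" unfolding r_def by (rule ext) simp
  have e2: "cntm (mset xs') = r + ind a + ind c"
  proof (rule ext)
    fix x
    have "cntm (mset xs') x + ind u x + ind v x = cntm (mset xs) x + ind a x + ind c x"
      unfolding xs'_def a_def c_def u_def v_def using cntm_upd2[OF ii] by blast
    then show "cntm (mset xs') x = (r + ind a + ind c) x" unfolding r_def by simp
  qed
  have M: "\<forall>l\<le>p. Mentry p u l + Mentry p v l = Mentry p a l + Mentry p c l"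
    unfolding a_def c_def using Mentry_flip[OF cl jk] d unfolding u_def v_def by blast
  have path: "(r + ind u + ind v, r + ind a + ind c) \<in> (edges (fiber p b) BB)\<^sup>*"
    using local_move[OF rvec cl cl2] G e1 M by simp
  have "cntm (mset xs') \<in> fiber p b"
  proof -
    have "\<forall>l\<le>p. Mt p (cntm (mset xs')) l = Mt p (cntm (mset xs)) l"
      using M cl cl2 by (simp add: e1 e2 Mt_add Mt_ind)
    then show ?thesis using G nonneg_cntm[of "mset xs'" p] xs'c unfolding fiber_def by auto
  qed
  then show ?thesis using xs'c path e1 e2 by simp
qed

lemma conn:
  assumes "set xs \<subseteq> cells p" "set ys \<subseteq> cells p" "cntm (mset xs) \<in> fiber p b" "cntm (mset ys) \<in> fiber p b"
  shows "(cntm (mset xs), cntm (mset ys)) \<in> (edges (fiber p b) BB)\<^sup>*"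
  using assms
proof (induct "pot p xs ys" arbitrary: xs ys rule: less_induct)
  case less
  note fb = fib_bits[OF less.prems]
  define n where "n = length xs"
  have len: "length ys = n" using fb n_def by simp
  have cx: "\<And>t. t < n \<Longrightarrow> xs!t \<in> cells p" using less.prems(1) nth_mem unfolding n_def by blast
  have cy: "\<And>t. t < n \<Longrightarrow> ys!t \<in> cells p" using less.prems(2) nth_mem len by blast
  show ?case
  proof (cases "pot p xs ys = 0")
    case True
    then have "\<forall>t<n. dst p (xs!t) (ys!t) = 0" unfolding pot_def n_def by simp
    then have "\<forall>t<n. xs!t = ys!t" using dst_0 cx cy by blast
    then have "xs = ys" using len by (simp add: n_def list_eq_iff_nth_eq)
    then show ?thesis by simp
  next
    case False
    have "\<exists>t0<n. dst p (xs!t0) (ys!t0) \<noteq> 0"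
    proof (rule ccontr)
      assume "\<not> ?thesis"
      then have "pot p xs ys = 0" unfolding pot_def n_def[symmetric] by (intro sum.neutral) auto
      then show False using False by simp
    qed
    then obtain t0 where t0: "t0 < n" "dst p (xs!t0) (ys!t0) \<noteq> 0" by blast
    have "\<exists>j0\<in>{1..p}. bt p (xs!t0) j0 \<noteq> bt p (ys!t0) j0"
    proof (rule ccontr)
      assume "\<not> ?thesis"
      then have "dst p (xs!t0) (ys!t0) = 0" unfolding dst_def by (intro sum.neutral) auto
      then show False using t0 by simp
    qed
    then obtain j0 where j0: "j0 \<in> {1..p}" "bt p (xs!t0) j0 \<noteq> bt p (ys!t0) j0" by blast
    have bin: "\<And>t l. t < n \<Longrightarrow> l \<in> {1..p} \<Longrightarrow> bt p (xs!t) l \<le> 1 \<and> bt p (ys!t) l \<le> 1"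
      using bt_le1 cx cy by auto
    have col: "\<And>l. l \<in> {1..p} \<Longrightarrow> (\<Sum>t<n. bt p (xs!t) l) = (\<Sum>t<n. bt p (ys!t) l)"
      using fb unfolding n_def by blast
    have ev: "\<And>t. t < n \<Longrightarrow> even (\<Sum>l\<in>{1..p}. if bt p (xs!t) l = bt p (ys!t) l then 0 else 1::nat)"
      using dst_even cx cy unfolding dst_def by blast
    obtain i i' j k where W: "i < n" "i' < n" "j \<in> {1..p}" "k \<in> {1..p}" "j \<noteq> k"
      "bt p (xs!i) j \<noteq> bt p (ys!i) j" "bt p (xs!i') j \<noteq> bt p (ys!i') j" "bt p (xs!i) j \<noteq> bt p (xs!i') j"
      "bt p (xs!i) k \<noteq> bt p (xs!i') k \<or> bt p (ys!i) k \<noteq> bt p (ys!i') k"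
      "\<not> (bt p (xs!i) k = bt p (ys!i) k \<and> bt p (xs!i') k = bt p (ys!i') k)"
      using core[where X="\<lambda>t l. bt p (xs!t) l" and Y="\<lambda>t l. bt p (ys!t) l" and n=n and p=p, OF bin col ev t0(1) j0] by blast
    have ii: "i \<noteq> i'" using W(8) by auto
    show ?thesis
    proof (cases "bt p (xs!i) k \<noteq> bt p (xs!i') k")
      case True
      define xs' where "xs' = xs[i := flip2 p (xs!i) j k, i' := flip2 p (xs!i') j k]"
      have st: "set xs' \<subseteq> cells p \<and> cntm (mset xs') \<in> fiber p b \<and>
         (cntm (mset xs), cntm (mset xs')) \<in> (edges (fiber p b) BB)\<^sup>*"
        unfolding xs'_def using list_step[OF less.prems(1,3), of i i' j k] W ii True n_def by blast
      have lx': "length xs' = n" unfolding xs'_def n_def by simp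
      have "pot p xs' ys < pot p xs ys"
        unfolding pot_def lx' n_def[symmetric]
      proof (rule pot_dec[OF W(1,2) ii])
        show "dst p (xs'!t) (ys!t) = dst p (xs!t) (ys!t)" if "t < n" "t \<noteq> i" "t \<noteq> i'" for t
          using that unfolding xs'_def by simp
        have "xs'!i = flip2 p (xs!i) j k" "xs'!i' = flip2 p (xs!i') j k"
          unfolding xs'_def using ii W(1,2) n_def by auto
        then show "dst p (xs'!i) (ys!i) + dst p (xs'!i') (ys!i') < dst p (xs!i) (ys!i) + dst p (xs!i') (ys!i')"
          using dst_flip_dec[OF cx[OF W(1)] cx[OF W(2)] cy[OF W(1)] cy[OF W(2)] W(3,4,5,6,7,8) True W(10)]
          by simp
      qed
      then have "(cntm (mset xs'), cntm (mset ys)) \<in> (edges (fiber p b) BB)\<^sup>*"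
        using less.hyps[of xs' ys] st less.prems(2,4) by blast
      then show ?thesis using st by (meson rtrancl_trans)
    next
      case False
      then have yk: "bt p (ys!i) k \<noteq> bt p (ys!i') k" using W(9) by blast
      define ys' where "ys' = ys[i := flip2 p (ys!i) j k, i' := flip2 p (ys!i') j k]"
      have bj: "bt p (xs!i) j \<le> 1" "bt p (xs!i') j \<le> 1" "bt p (ys!i) j \<le> 1" "bt p (ys!i') j \<le> 1"
        using bin W by auto
      have yj: "bt p (ys!i) j \<noteq> bt p (ys!i') j" using bj W(6,7,8) by auto
      have st: "set ys' \<subseteq> cells p \<and> cntm (mset ys') \<in> fiber p b \<and>
         (cntm (mset ys), cntm (mset ys')) \<in> (edges (fiber p b) BB)\<^sup>*"
        unfolding ys'_def using list_step[OF less.prems(2,4), of i i' j k] W ii yk yj len by blast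
      have ly': "length ys' = n" unfolding ys'_def using len by simp
      have "pot p xs ys' < pot p xs ys"
        unfolding pot_def n_def[symmetric]
      proof (rule pot_dec[OF W(1,2) ii])
        show "dst p (xs!t) (ys'!t) = dst p (xs!t) (ys!t)" if "t < n" "t \<noteq> i" "t \<noteq> i'" for t
          using that unfolding ys'_def by simp
        have "ys'!i = flip2 p (ys!i) j k" "ys'!i' = flip2 p (ys!i') j k"
          unfolding ys'_def using ii W(1,2) len by auto
        moreover have "\<not> (bt p (ys!i) k = bt p (xs!i) k \<and> bt p (ys!i') k = bt p (xs!i') k)"
          using W(10) by auto
        ultimately show "dst p (xs!i) (ys'!i) + dst p (xs!i') (ys'!i') < dst p (xs!i) (ys!i) + dst p (xs!i') (ys!i')"
          using dst_flip_dec[OF cy[OF W(1)] cy[OF W(2)] cx[OF W(1)] cx[OF W(2)] W(3,4,5) W(6)[symmetric] W(7)[symmetric] yj yk]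
          by (simp add: dst_sym)
      qed
      then have "(cntm (mset xs), cntm (mset ys')) \<in> (edges (fiber p b) BB)\<^sup>*"
        using less.hyps[of xs ys'] st less.prems(1,3) by blast
      moreover have "(cntm (mset ys'), cntm (mset ys)) \<in> (edges (fiber p b) BB)\<^sup>*"
        using st edges_sym by blast
      ultimately show ?thesis by (meson rtrancl_trans)
    qed
  qed
qed

lemma markov: "markov_basis p BB"
proof -
  have fd2: "finite (deg2_fibers p)"
  proof -
    define S where "S = {b. nonneg_vec p b \<and> (\<Sum>i\<in>cells p. b i) = 2}"
    have "deg2_fibers p = fiber p ` S" unfolding deg2_fibers_def S_def by auto
    moreover have "S \<subseteq> {f. \<forall>x. (x \<in> cells p \<longrightarrow> f x \<in> {0..2}) \<and> (x \<notin> cells p \<longrightarrow> f x = 0)}"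
    proof safe
      fix f x assume "f \<in> S"
      then have nn: "nonneg_vec p f" and s2: "(\<Sum>i\<in>cells p. f i) = 2" unfolding S_def by auto
      { assume x: "x \<in> cells p"
        have "f x \<le> (\<Sum>i\<in>cells p. f i)"
          using nn x finite_cells by (intro member_le_sum) (auto simp: nonneg_vec_def)
        then show "f x \<in> {0..2}" using s2 nn by (auto simp: nonneg_vec_def) }
      { assume "x \<notin> cells p" then show "f x = 0" using nn by (auto simp: nonneg_vec_def vec_def) }
    qed
    moreover have "finite {f. \<forall>x. (x \<in> cells p \<longrightarrow> f x \<in> {0..2::int}) \<and> (x \<notin> cells p \<longrightarrow> f x = 0)}"
      by (rule finite_set_of_finite_funs) (auto simp: finite_cells)
    ultimately have "finite S" using finite_subset by blast
    then show ?thesis using \<open>deg2_fibers p = fiber p ` S\<close> by simp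
  qed
  have "BB = \<Union> (BF ` {F. F \<in> deg2_fibers p \<and> card F > 1})" unfolding BB_def by auto
  moreover have "finite (BF F)" if "F \<in> deg2_fibers p" "card F > 1" for F
    using hBF[OF that] that(2) by (intro card_ge_0_finite) simp
  ultimately have finB: "finite BB" using fd2 by auto
  have mv: "is_move p z" if zB: "z \<in> BB" for z
  proof -
    obtain F where F: "F \<in> deg2_fibers p" "card F > 1" "z \<in> BF F" using zB unfolding BB_def by auto
    then obtain x y where xy: "x \<in> F" "y \<in> F" "z = x - y" using hBF by blast
    obtain b0 where b0: "F = fiber p b0" using F(1) unfolding deg2_fibers_def by auto
    have "nonneg_vec p x" "nonneg_vec p y" "\<forall>j\<le>p. Mt p x j = Mt p b0 j" "\<forall>j\<le>p. Mt p y j = Mt p b0 j"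
      using xy b0 unfolding fiber_def by auto
    then show ?thesis unfolding is_move_def xy(3)
      by (auto simp: nonneg_vec_def vec_def Mt_diff)
  qed
  have gc: "graph_connected (fiber p b) BB" if "nonneg_vec p b" for b
    unfolding gc_edges
  proof (intro ballI)
    fix x y assume x: "x \<in> fiber p b" and y: "y \<in> fiber p b"
    obtain M where M: "set_mset M \<subseteq> cells p" "x = cntm M" using ex_cntm x unfolding fiber_def by blast
    obtain N where N: "set_mset N \<subseteq> cells p" "y = cntm N" using ex_cntm y unfolding fiber_def by blast
    obtain xs where xs: "mset xs = M" using ex_mset by blast
    obtain ys where ys: "mset ys = N" using ex_mset by blast
    show "(x, y) \<in> (edges (fiber p b) BB)\<^sup>*"
      using conn[of xs ys b] M N xs ys x y by auto
  qed
  show ?thesis unfolding markov_basis_def using finB mv gc by blast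
qed

end

lemma tree_bound:
  fixes L :: "('a \<times> 'a) set"
  assumes "finite L" "finite V" "x \<in> V" "\<forall>y\<in>V. (x,y) \<in> (L \<union> L\<inverse>)\<^sup>*"
  shows "card V \<le> card L + 1"
  using assms
proof (induct "card L" arbitrary: L V x rule: less_induct)
  case less
  show ?case
  proof (cases "L = {}")
    case True
    then have "(L \<union> L\<inverse>)\<^sup>* = Id" by simp
    then have "V \<subseteq> {x}" using less.prems(4) by auto
    then have "card V \<le> card {x}" by (intro card_mono) auto
    then show ?thesis by simp
  next
    case False
    then obtain a b where e: "(a,b) \<in> L" by auto
    define f where "f = (\<lambda>z. if z = b then a else z)"
    define L' where "L' = (\<lambda>(u,w). (f u, f w)) ` (L - {(a,b)})"
    have finL': "finite L'" unfolding L'_def using less.prems by auto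
    have cL': "card L' \<le> card (L - {(a,b)})" unfolding L'_def
      using card_image_le less.prems(1) by blast
    have cL: "card (L - {(a,b)}) < card L" using e less.prems(1)
      by (intro card_Diff1_less)
    have stp: "(f y, f z) \<in> (L' \<union> L'\<inverse>)\<^sup>*" if "(y,z) \<in> L \<union> L\<inverse>" for y z
    proof (cases "(y,z) = (a,b) \<or> (z,y) = (a,b)")
      case True
      then have "f y = f z" unfolding f_def by auto
      then show ?thesis by simp
    next
      case False
      then have "(y,z) \<in> (L - {(a,b)}) \<or> (z,y) \<in> (L - {(a,b)})" using that by auto
      then have "(f y, f z) \<in> L' \<union> L'\<inverse>" unfolding L'_def by force
      then show ?thesis by blast
    qed
    have conn: "\<forall>y\<in>f ` V. (f x, y) \<in> (L' \<union> L'\<inverse>)\<^sup>*"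
    proof
      fix y' assume "y' \<in> f ` V"
      then obtain y where y: "y \<in> V" "y' = f y" by auto
      have "(x,y) \<in> (L \<union> L\<inverse>)\<^sup>*" using less.prems y by auto
      then have "(f x, f y) \<in> (L' \<union> L'\<inverse>)\<^sup>*"
      proof (induct rule: rtrancl_induct)
        case base then show ?case by simp
      next
        case (step y z)
        then show ?case using rtrancl_trans[OF step(3) stp[OF step(2)]] by simp
      qed
      then show "(f x, y') \<in> (L' \<union> L'\<inverse>)\<^sup>*" using y by simp
    qed
    have lt: "card L' < card L" using cL' cL by linarith
    have fV: "finite (f ` V)" using less.prems(2) by simp
    have IH: "card (f ` V) \<le> card L' + 1"
      using less.hyps[OF lt finL' fV _ conn] less.prems(3) by blast
    have sub: "V \<subseteq> insert b (f ` V)"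
    proof
      fix v assume v: "v \<in> V"
      show "v \<in> insert b (f ` V)"
      proof (cases "v = b")
        case True then show ?thesis by simp
      next
        case False
        then have "f v = v" unfolding f_def by simp
        then show ?thesis using v by (metis imageI insertI2)
      qed
    qed
    have "card V \<le> card (insert b (f ` V))" by (rule card_mono) (use fV sub in auto)
    also have "\<dots> \<le> card (f ` V) + 1" using fV by (simp add: card_insert_if)
    finally show ?thesis using IH cL' cL by linarith
  qed
qed


lemma deg1:
  assumes "nonneg_vec p f" "(\<Sum>i\<in>cells p. f i) = 1"
  shows "\<exists>d\<in>cells p. f = ind d"
proof -
  have nn: "\<And>i. f i \<ge> 0" and v: "\<And>i. i \<notin> cells p \<Longrightarrow> f i = 0"
    using assms(1) unfolding nonneg_vec_def vec_def by auto
  obtain d where d: "d \<in> cells p" "f d \<noteq> 0"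
  proof -
    have "\<exists>d\<in>cells p. f d \<noteq> 0"
    proof (rule ccontr)
      assume "\<not> ?thesis"
      then have "(\<Sum>i\<in>cells p. f i) = 0" by (intro sum.neutral) auto
      then show False using assms(2) by simp
    qed
    then show ?thesis using that by blast
  qed
  have "(\<Sum>i\<in>cells p. f i) = f d + (\<Sum>i\<in>cells p - {d}. f i)"
    using d finite_cells by (simp add: sum.remove)
  moreover have "(\<Sum>i\<in>cells p - {d}. f i) \<ge> 0" using nn by (simp add: sum_nonneg)
  ultimately have fd: "f d = 1" and rest: "(\<Sum>i\<in>cells p - {d}. f i) = 0"
    using assms(2) d nn[of d] by linarith+
  have "\<forall>i\<in>cells p - {d}. f i = 0"
    using rest nn finite_cells by (subst sum_nonneg_eq_0_iff[symmetric]) auto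
  then have "f = ind d" using fd v unfolding ind_def by (intro ext) (metis DiffI singletonD)
  then show ?thesis using d by blast
qed

lemma Mentry_inj:
  assumes "d \<in> cells p" "d' \<in> cells p" "\<forall>j\<le>p. Mentry p d j = Mentry p d' j"
  shows "d = d'"
proof (rule bt_inj[OF assms(1,2)])
  show "\<forall>j\<in>{1..p}. bt p d j = bt p d' j"
  proof
    fix j assume j: "j \<in> {1..p}"
    then have "1 - 2 * int (bt p d j) = 1 - 2 * int (bt p d' j)"
      using assms Mentry_bt[OF assms(1)] Mentry_bt[OF assms(2)] by auto
    then show "bt p d j = bt p d' j" by simp
  qed
qed

lemma deg2_sep:
  assumes F: "F \<in> deg2_fibers p" and ac: "a \<in> F" "c \<in> F" "a \<noteq> c"
  shows "a i = 0 \<or> c i = 0"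
proof (rule ccontr)
  assume H: "\<not> ?thesis"
  obtain b where b: "F = fiber p b" "nonneg_vec p b" "(\<Sum>i\<in>cells p. b i) = 2"
    using F unfolding deg2_fibers_def by auto
  have fa: "nonneg_vec p a" "\<forall>j\<le>p. Mt p a j = Mt p b j" using ac b unfolding fiber_def by auto
  have fc: "nonneg_vec p c" "\<forall>j\<le>p. Mt p c j = Mt p b j" using ac b unfolding fiber_def by auto
  have i: "i \<in> cells p" using H fa(1) unfolding nonneg_vec_def vec_def by auto
  have nz: "a i \<noteq> 0" "c i \<noteq> 0" "a i \<ge> 0" "c i \<ge> 0" using H fa(1) fc(1) unfolding nonneg_vec_def by auto
  then have pos: "a i \<ge> 1" "c i \<ge> 1" by linarith+
  have s2: "(\<Sum>i\<in>cells p. a i) = 2" "(\<Sum>i\<in>cells p. c i) = 2"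
    using fa(2) fc(2) b(3) by (auto simp: Mt0[symmetric] dest: spec[of _ 0])
  have red: "\<exists>d\<in>cells p. f - ind i = ind d" if "nonneg_vec p f" "f i \<ge> 1" "(\<Sum>i\<in>cells p. f i) = 2" for f
  proof (rule deg1)
    show "nonneg_vec p (f - ind i)" using that i unfolding nonneg_vec_def vec_def ind_def by auto
    show "(\<Sum>k\<in>cells p. (f - ind i) k) = 1"
      using that(3) sum_ind[OF i] by (simp add: sum_subtractf)
  qed
  obtain d where d: "d \<in> cells p" "a - ind i = ind d" using red[OF fa(1) pos(1) s2(1)] by blast
  obtain d' where d': "d' \<in> cells p" "c - ind i = ind d'" using red[OF fc(1) pos(2) s2(2)] by blast
  have "\<forall>j\<le>p. Mentry p d j = Mentry p d' j"
  proof (intro allI impI)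
    fix j assume "j \<le> p"
    have "Mt p (a - ind i) j = Mt p (c - ind i) j" using fa(2) fc(2) \<open>j \<le> p\<close> by (simp add: Mt_diff)
    then show "Mentry p d j = Mentry p d' j" using d d' by (simp add: Mt_ind)
  qed
  then have "d = d'" using Mentry_inj d d' by blast
  then have "a - ind i = c - ind i" using d d' by simp
  then have "a = c" by (metis diff_add_cancel)
  then show False using ac by simp
qed

definition negp :: "(nat list \<Rightarrow> int) \<Rightarrow> nat list \<Rightarrow> int" where "negp w = (\<lambda>c. max 0 (- w c))"
definition posp :: "(nat list \<Rightarrow> int) \<Rightarrow> nat list \<Rightarrow> int" where "posp w = (\<lambda>c. max 0 (w c))"

lemma negp_posp:
  assumes "\<And>i. a i \<ge> 0" "\<And>i. c i \<ge> 0" "\<And>i. a i = 0 \<or> c i = 0"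
  shows "negp (c - a) = a \<and> posp (c - a) = c"
proof
  show "negp (c - a) = a" unfolding negp_def
  proof (rule ext)
    fix i show "max 0 (- (c - a) i) = a i" using assms[of i] by auto
  qed
  show "posp (c - a) = c" unfolding posp_def
  proof (rule ext)
    fix i show "max 0 ((c - a) i) = c i" using assms[of i] by auto
  qed
qed

lemma deg2_nn: "F \<in> deg2_fibers p \<Longrightarrow> a \<in> F \<Longrightarrow> a i \<ge> 0"
  unfolding deg2_fibers_def fiber_def nonneg_vec_def by auto

context mb begin

lemma key_edge:
  assumes F0: "F0 \<in> deg2_fibers p" and uv: "u \<in> F0" "v \<in> F0" "u \<noteq> v" and w: "v - u \<in> BB"
  shows "v - u \<in> BF F0 \<and> negp (v - u) = u \<and> posp (v - u) = v"
proof -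
  have np: "negp (v - u) = u \<and> posp (v - u) = v"
    using negp_posp[of u v] deg2_nn[OF F0] deg2_sep[OF F0 uv(1,2,3)] uv by blast
  obtain F1 where F1: "F1 \<in> deg2_fibers p" "card F1 > 1" "v - u \<in> BF F1" using w unfolding BB_def by auto
  then obtain x1 y1 where xy: "x1 \<in> F1" "y1 \<in> F1" "v - u = x1 - y1" using hBF by blast
  have "x1 \<noteq> y1"
  proof
    assume "x1 = y1"
    then have "v - u = 0" using xy by simp
    then have "v = u" by (metis diff_eq_diff_eq diff_self)
    then show False using uv by simp
  qed
  then have "posp (x1 - y1) = x1"
    using negp_posp[of y1 x1] deg2_nn[OF F1(1)] deg2_sep[OF F1(1) xy(2,1)] xy by blast
  then have "x1 = v" using np xy by simp
  obtain b1 where "F1 = fiber p b1" using F1(1) unfolding deg2_fibers_def by auto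
  then have "F1 = fiber p v" using fiber_eq xy(1) \<open>x1 = v\<close> by metis
  moreover obtain b0 where "F0 = fiber p b0" using F0 unfolding deg2_fibers_def by auto
  then have "F0 = fiber p v" using fiber_eq uv(2) by metis
  ultimately show ?thesis using F1 np by simp
qed

lemma minimal: "B' \<subset> BB \<Longrightarrow> \<not> markov_basis p B'"
proof
  assume sub: "B' \<subset> BB" and mk: "markov_basis p B'"
  obtain z where z: "z \<in> BB" "z \<notin> B'" using sub by auto
  obtain F0 where F0: "F0 \<in> deg2_fibers p" "card F0 > 1" "z \<in> BF F0" using z unfolding BB_def by auto
  obtain b0 where b0: "F0 = fiber p b0" "nonneg_vec p b0" using F0(1) unfolding deg2_fibers_def by auto
  have gc: "graph_connected F0 B'" using mk b0 unfolding markov_basis_def by auto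
  have cBF: "card (BF F0) = card F0 - 1" using hBF F0 by blast
  have finBF: "finite (BF F0)" using cBF F0(2) by (intro card_ge_0_finite) simp
  have finF0: "finite F0" using b0 fiber_finite by simp
  define L where "L = (\<lambda>w. (negp w, posp w)) ` (BF F0 - {z})"
  have finL: "finite L" unfolding L_def using finBF by simp
  have cL: "card L \<le> card F0 - 2"
  proof -
    have "card L \<le> card (BF F0 - {z})" unfolding L_def by (rule card_image_le) (use finBF in simp)
    also have "\<dots> = card (BF F0) - 1" using F0(3) finBF by simp
    finally show ?thesis using cBF by simp
  qed
  have one: "(u, v) \<in> L" if "u \<in> F0" "v \<in> F0" "u \<noteq> v" "v - u \<in> B'" for u v
  proof -
    have "v - u \<in> BB" using sub that(4) by blast
    then have k: "v - u \<in> BF F0 \<and> negp (v - u) = u \<and> posp (v - u) = v"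
      using key_edge[OF F0(1) that(1,2,3)] by blast
    have "v - u \<noteq> z" using that(4) z(2) by auto
    then show ?thesis unfolding L_def using k by (auto intro!: image_eqI[of _ _ "v - u"])
  qed
  have "edges F0 B' \<subseteq> (L \<union> L\<inverse>)\<^sup>="
  proof
    fix e assume "e \<in> edges F0 B'"
    then obtain u v where e: "e = (u,v)" "u \<in> F0" "v \<in> F0" "v - u \<in> B' \<or> u - v \<in> B'"
      unfolding edges_def by auto
    show "e \<in> (L \<union> L\<inverse>)\<^sup>="
    proof (cases "u = v")
      case True then show ?thesis using e by simp
    next
      case False
      then show ?thesis using e one[of u v] one[of v u] by auto
    qed
  qed
  then have "(edges F0 B')\<^sup>* \<subseteq> (L \<union> L\<inverse>)\<^sup>*" by (metis rtrancl_mono rtrancl_reflcl)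
  moreover obtain x where x: "x \<in> F0" using F0(2) by (metis card.empty ex_in_conv not_less_zero)
  ultimately have "\<forall>y\<in>F0. (x,y) \<in> (L \<union> L\<inverse>)\<^sup>*" using gc unfolding gc_edges by blast
  then have "card F0 \<le> card L + 1" using tree_bound[OF finL finF0 x] by blast
  then show False using cL F0(2) by linarith
qed

end

theorem corollary1:
  fixes p :: nat and BF :: "(nat list \<Rightarrow> int) set \<Rightarrow> (nat list \<Rightarrow> int) set"
  assumes "p \<ge> 2"
    and "\<And>F. F \<in> deg2_fibers p \<Longrightarrow> card F > 1 \<Longrightarrow>
           card (BF F) = card F - 1 \<and>
           (\<forall>z\<in>BF F. \<exists>x\<in>F. \<exists>y\<in>F. z = x - y) \<and>
           graph_connected F (BF F)"
  shows "minimal_markov_basis p (\<Union>{BF F | F. F \<in> deg2_fibers p \<and> card F > 1})"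
proof -
  interpret mb p BF using assms by unfold_locales
  show ?thesis using markov minimal unfolding minimal_markov_basis_def BB_def by blast
qed

end
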